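(* Let $A$ be an MV-algebra, let $\operatorname{PDer}(A)=\{d_a: a\in A\}$ where $d_a(x)=a\odot x$, and let $\operatorname{IDer}(A)$ be the set of isotone $(\odot,\vee)$-derivations $d$ on $A$ with $d(1)\in\mathbf{B}(A)$. Then both sets are closed under pointwise $\vee$ and $\wedge$, and (1) $\operatorname{PDer}(A)$ is a lattice isomorphic to the lattice $(A,\vee,\wedge)$ via $d_a\mapsto a$; (2) $\operatorname{IDer}(A)$ is a lattice isomorphic to the lattice $(\mathbf{B}(A),\vee,\wedge)$ via $d\mapsto d(1)$.
   Context: An MV-algebra is an algebra $(A,\oplus,{}^*,0)$ of type $(2,1,0)$ satisfying: $x\oplus(y\oplus z)=(x\oplus y)\oplus z$, $x\oplus y=y\oplus x$, $x\oplus 0=x$, $x^{**}=x$, $x\oplus 0^*=0^*$, $(x^*\oplus y)^*\oplus y=(y^*\oplus x)^*\oplus x$. Put $1=0^*$ and $x\odot y=(x^*\oplus y^* )^*$. The natural order is $x\le y$ iff $x^*\oplus y=1$, with lattice operations $x\vee y=(x\odot y^* )\oplus y$, $x\wedge y=x\odot(x^*\oplus y)$. The Boolean center is $\mathbf{B}(A)=\{x\in A: x\oplus x=x\}$. A $(\odot,\vee)$-derivation on $A$ is a map $d:A\to A$ with $d(x\odot y)=(d(x)\odot y)\vee(x\odot d(y))$ for all $x,y\in A$; it is isotone if $x\le y$ implies $d(x)\le d(y)$. Maps $A\to A$ are ordered and combined pointwise. *)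

theory Defs
  imports Main
begin

definition mv_algebra :: "('a \<Rightarrow> 'a \<Rightarrow> 'a) \<Rightarrow> ('a \<Rightarrow> 'a) \<Rightarrow> 'a \<Rightarrow> bool" where
  "mv_algebra pl ng z \<longleftrightarrow>
     (\<forall>x y w. pl x (pl y w) = pl (pl x y) w) \<and>
     (\<forall>x y. pl x y = pl y x) \<and>
     (\<forall>x. pl x z = x) \<and>
     (\<forall>x. ng (ng x) = x) \<and>
     (\<forall>x. pl x (ng z) = ng z) \<and>
     (\<forall>x y. pl (ng (pl (ng x) y)) y = pl (ng (pl (ng y) x)) x)"

definition mv_one :: "('a \<Rightarrow> 'a) \<Rightarrow> 'a \<Rightarrow> 'a" where
  "mv_one ng z = ng z"

definition mv_odot :: "('a \<Rightarrow> 'a \<Rightarrow> 'a) \<Rightarrow> ('a \<Rightarrow> 'a) \<Rightarrow> 'a \<Rightarrow> 'a \<Rightarrow> 'a" where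
  "mv_odot pl ng x y = ng (pl (ng x) (ng y))"

definition mv_le :: "('a \<Rightarrow> 'a \<Rightarrow> 'a) \<Rightarrow> ('a \<Rightarrow> 'a) \<Rightarrow> 'a \<Rightarrow> 'a \<Rightarrow> 'a \<Rightarrow> bool" where
  "mv_le pl ng z x y \<longleftrightarrow> pl (ng x) y = mv_one ng z"

definition mv_join :: "('a \<Rightarrow> 'a \<Rightarrow> 'a) \<Rightarrow> ('a \<Rightarrow> 'a) \<Rightarrow> 'a \<Rightarrow> 'a \<Rightarrow> 'a" where
  "mv_join pl ng x y = pl (mv_odot pl ng x (ng y)) y"

definition mv_meet :: "('a \<Rightarrow> 'a \<Rightarrow> 'a) \<Rightarrow> ('a \<Rightarrow> 'a) \<Rightarrow> 'a \<Rightarrow> 'a \<Rightarrow> 'a" where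
  "mv_meet pl ng x y = mv_odot pl ng x (pl (ng x) y)"

definition mv_boolean_center :: "('a \<Rightarrow> 'a \<Rightarrow> 'a) \<Rightarrow> 'a set" where
  "mv_boolean_center pl = {x. pl x x = x}"

definition odot_join_derivation :: "('a \<Rightarrow> 'a \<Rightarrow> 'a) \<Rightarrow> ('a \<Rightarrow> 'a) \<Rightarrow> ('a \<Rightarrow> 'a) \<Rightarrow> bool" where
  "odot_join_derivation pl ng d \<longleftrightarrow>
     (\<forall>x y. d (mv_odot pl ng x y) =
            mv_join pl ng (mv_odot pl ng (d x) y) (mv_odot pl ng x (d y)))"

definition mv_isotone :: "('a \<Rightarrow> 'a \<Rightarrow> 'a) \<Rightarrow> ('a \<Rightarrow> 'a) \<Rightarrow> 'a \<Rightarrow> ('a \<Rightarrow> 'a) \<Rightarrow> bool" where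
  "mv_isotone pl ng z d \<longleftrightarrow> (\<forall>x y. mv_le pl ng z x y \<longrightarrow> mv_le pl ng z (d x) (d y))"

definition pder :: "('a \<Rightarrow> 'a \<Rightarrow> 'a) \<Rightarrow> ('a \<Rightarrow> 'a) \<Rightarrow> 'a \<Rightarrow> ('a \<Rightarrow> 'a)" where
  "pder pl ng a = (\<lambda>x. mv_odot pl ng a x)"

definition PDer :: "('a \<Rightarrow> 'a \<Rightarrow> 'a) \<Rightarrow> ('a \<Rightarrow> 'a) \<Rightarrow> ('a \<Rightarrow> 'a) set" where
  "PDer pl ng = range (pder pl ng)"

definition IDer :: "('a \<Rightarrow> 'a \<Rightarrow> 'a) \<Rightarrow> ('a \<Rightarrow> 'a) \<Rightarrow> 'a \<Rightarrow> ('a \<Rightarrow> 'a) set" where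
  "IDer pl ng z = {d. odot_join_derivation pl ng d \<and> mv_isotone pl ng z d
                      \<and> d (mv_one ng z) \<in> mv_boolean_center pl}"

definition fun_join :: "('a \<Rightarrow> 'a \<Rightarrow> 'a) \<Rightarrow> ('a \<Rightarrow> 'a) \<Rightarrow> ('a \<Rightarrow> 'a) \<Rightarrow> ('a \<Rightarrow> 'a) \<Rightarrow> ('a \<Rightarrow> 'a)" where
  "fun_join pl ng d e = (\<lambda>x. mv_join pl ng (d x) (e x))"

definition fun_meet :: "('a \<Rightarrow> 'a \<Rightarrow> 'a) \<Rightarrow> ('a \<Rightarrow> 'a) \<Rightarrow> ('a \<Rightarrow> 'a) \<Rightarrow> ('a \<Rightarrow> 'a) \<Rightarrow> ('a \<Rightarrow> 'a)" where
  "fun_meet pl ng d e = (\<lambda>x. mv_meet pl ng (d x) (e x))"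

end

theory Submission
  imports Defs
begin

locale mv =
  fixes pl :: "'a \<Rightarrow> 'a \<Rightarrow> 'a" and ng :: "'a \<Rightarrow> 'a" and z :: 'a
  assumes assoc: "pl x (pl y w) = pl (pl x y) w"
    and comm: "pl x y = pl y x"
    and zr: "pl x z = x"
    and nn[simp]: "ng (ng x) = x"
    and onex: "pl x (ng z) = ng z"
    and ax6: "pl (ng (pl (ng x) y)) y = pl (ng (pl (ng y) x)) x"
begin

lemma lcomm: "pl x (pl y w) = pl y (pl x w)"
  by (metis assoc comm)

lemmas ac = assoc[symmetric] comm lcomm

lemma zl[simp]: "pl z x = x" by (metis comm zr)
lemma zr'[simp]: "pl x z = x" by (rule zr)
lemma onel[simp]: "pl (ng z) x = ng z" by (metis comm onex)
lemma oner[simp]: "pl x (ng z) = ng z" by (rule onex)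
lemma onel2[simp]: "pl (ng z) (pl x y) = ng z" by simp
lemma compl[simp]: "pl (ng x) x = ng z"
proof -
  have "pl (ng (pl (ng x) (ng z))) (ng z) = pl (ng (pl (ng (ng z)) x)) x" by (rule ax6)
  thus ?thesis by simp
qed
lemma compr[simp]: "pl x (ng x) = ng z" by (metis comm compl)
lemma compl2[simp]: "pl (ng x) (pl x y) = ng z" by (metis assoc compl onel)
lemma compr2[simp]: "pl x (pl (ng x) y) = ng z" by (metis assoc compr onel)
lemma ng_inj: "ng x = ng y \<longleftrightarrow> x = y" by (metis nn)

lemma od: "mv_odot pl ng x y = ng (pl (ng x) (ng y))" by (simp add: mv_odot_def)
lemma le: "mv_le pl ng z x y \<longleftrightarrow> pl (ng x) y = ng z" by (simp add: mv_le_def mv_one_def)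
lemma jn: "mv_join pl ng x y = pl (ng (pl (ng x) y)) y" by (simp add: mv_join_def od)
lemma mt: "mv_meet pl ng x y = ng (pl (ng x) (ng (pl (ng x) y)))" by (simp add: mv_meet_def od)

abbreviation "leq x y \<equiv> mv_le pl ng z x y"
abbreviation "odt x y \<equiv> mv_odot pl ng x y"
abbreviation "jn x y \<equiv> mv_join pl ng x y"
abbreviation "mt x y \<equiv> mv_meet pl ng x y"

lemma od_comm: "odt x y = odt y x" by (simp add: od comm)
lemma od_assoc: "odt (odt x y) w = odt x (odt y w)" by (simp add: od ac)
lemma od_lcomm: "odt x (odt y w) = odt y (odt x w)" by (simp add: od ac)
lemma od_one[simp]: "odt x (ng z) = x" "odt (ng z) x = x" by (simp_all add: od)
lemma od_zero[simp]: "odt x z = z" "odt z x = z" by (simp_all add: od)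
lemma ng_od: "ng (odt x y) = pl (ng x) (ng y)" by (simp add: od)
lemma od_compl[simp]: "odt x (ng x) = z" by (simp add: od)
lemma od_compl2[simp]: "odt (ng x) x = z" by (simp add: od comm)

lemma jn_comm: "jn x y = jn y x" by (simp add: jn ax6)
lemma le_od: "leq x y \<longleftrightarrow> odt x (ng y) = z"
  by (simp add: le od) (metis nn)
lemma jn_le: "leq x y \<Longrightarrow> jn x y = y" by (simp add: le jn)
lemma antisym: "leq x y \<Longrightarrow> leq y x \<Longrightarrow> x = y" by (metis jn_comm jn_le)
lemma le_refl[simp]: "leq x x" by (simp add: le)
lemma le_top[simp]: "leq x (ng z)" by (simp add: le)
lemma le_bot[simp]: "leq z x" by (simp add: le)
lemma le_plus: "leq y (pl x y)" by (simp add: le lcomm)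
lemma le_jn2: "leq y (jn x y)" by (simp add: jn le_plus)
lemma le_jn1: "leq x (jn x y)" by (metis jn_comm le_jn2)
lemma le_decomp: "leq x y \<Longrightarrow> y = pl x (odt y (ng x))"
  by (metis jn_comm jn_le jn od nn comm)
lemma le_trans: "leq x y \<Longrightarrow> leq y w \<Longrightarrow> leq x w"
proof -
  assume a: "leq x y" and b: "leq y w"
  have "w = pl y (odt w (ng y))" using b by (rule le_decomp)
  hence "pl (ng x) w = pl (pl (ng x) y) (odt w (ng y))" by (metis assoc)
  thus ?thesis using a by (simp add: le)
qed
lemma le_neg: "leq x y \<longleftrightarrow> leq (ng y) (ng x)" by (simp add: le comm)
lemma pl_mono: "leq x y \<Longrightarrow> leq (pl x c) (pl y c)"
proof -
  assume a: "leq x y"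
  have "pl y c = pl (pl x c) (odt y (ng x))" using le_decomp[OF a] by (metis ac)
  thus ?thesis by (simp add: le)
qed
lemma od_mono: "leq x y \<Longrightarrow> leq (odt c x) (odt c y)"
  by (metis le_neg pl_mono comm ng_od)
lemma od_mono1: "leq x y \<Longrightarrow> leq (odt x c) (odt y c)"
  by (metis od_mono od_comm)
lemma od_le: "leq (odt x y) x" by (simp add: le od ac)
lemma od_le2: "leq (odt x y) y" by (metis od_le od_comm)
lemma resid: "leq (odt u v) w \<longleftrightarrow> leq v (pl (ng u) w)" by (simp add: le od ac)

lemma jn_lub: "leq u w \<Longrightarrow> leq v w \<Longrightarrow> leq (jn u v) w"
proof -
  assume a: "leq u w" and b: "leq v w"
  define t where "t = odt w (ng v)"
  have w: "w = pl v t" using le_decomp[OF b] t_def by simp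
  have "ng (jn u v) = odt (pl (ng u) v) (ng v)" by (simp add: jn od)
  hence "pl (ng (jn u v)) w = pl (pl (odt (pl (ng u) v) (ng v)) v) t" using w by (metis assoc)
  also have "pl (odt (pl (ng u) v) (ng v)) v = jn (pl (ng u) v) v" by (simp add: jn od)
  also have "\<dots> = pl (ng u) v" by (metis jn_comm jn_le le_plus)
  finally have "pl (ng (jn u v)) w = pl (ng u) w" using w by (metis assoc)
  thus ?thesis using a by (simp add: le)
qed

lemma mt_dual: "mt x y = ng (jn (ng y) (ng x))"
  by (simp add: mt jn ac)
lemma mt_comm: "mt x y = mt y x"
  by (metis mt_dual jn_comm)
lemma mt_dual2: "mt x y = ng (jn (ng x) (ng y))"
  by (metis mt_dual jn_comm)
lemma jn_dual: "jn x y = ng (mt (ng x) (ng y))"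
  by (simp add: mt_dual2)
lemma mt_le: "leq x y \<Longrightarrow> mt x y = x" by (simp add: mt le)
lemma mt_od: "mt x y = odt x (pl (ng x) y)" by (simp add: mv_meet_def)
lemma le_mt1: "leq (mt x y) x" by (metis mt_dual2 le_neg nn le_jn1)
lemma le_mt2: "leq (mt x y) y" by (metis mt_comm le_mt1)
lemma mt_glb: "leq w u \<Longrightarrow> leq w v \<Longrightarrow> leq w (mt u v)"
  by (metis mt_dual2 le_neg nn jn_lub)

lemma step1: "pl (ng x) (mt x y) = pl (ng x) y"
proof -
  define c where "c = pl (ng x) y"
  have "pl (ng (pl (ng c) (ng x))) (ng x) = pl (ng (pl (ng (ng x)) c)) c" by (rule ax6)
  hence "pl (ng x) (odt x c) = jn (ng x) c" by (simp add: od jn comm)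
  also have "\<dots> = c" using jn_le[of "ng x" c] by (simp add: c_def le)
  finally show ?thesis by (simp add: mt_od c_def)
qed
lemma step2: "pl (odt y (ng x)) (mt y x) = y"
proof -
  have "mt y x = odt y (ng (odt y (ng x)))" by (simp add: mt_od ng_od)
  hence "pl (odt y (ng x)) (mt y x) = jn y (odt y (ng x))" by (simp add: jn od comm)
  also have "\<dots> = y" by (metis jn_comm jn_le od_le)
  finally show ?thesis .
qed
lemma prelin_mt: "mt (odt x (ng y)) (odt y (ng x)) = z"
proof -
  have np: "ng (odt x (ng y)) = pl (ng x) y" by (simp add: ng_od)
  have "pl (ng (odt x (ng y))) (odt y (ng x)) = pl (ng x) (pl (mt y x) (odt y (ng x)))"
    using np step1[of x y] mt_comm[of x y] by (metis assoc)
  also have "\<dots> = ng (odt x (ng y))" using step2[of y x] np by (simp add: comm)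
  finally have "pl (ng (odt x (ng y))) (odt y (ng x)) = ng (odt x (ng y))" .
  thus ?thesis by (simp add: mt_od)
qed
lemma prelin: "jn (pl (ng x) y) (pl (ng y) x) = ng z"
proof -
  have "jn (pl (ng x) y) (pl (ng y) x) = ng (mt (odt x (ng y)) (odt y (ng x)))"
    by (simp add: jn_dual od)
  thus ?thesis by (simp add: prelin_mt)
qed

lemma distA: "odt (jn a b) x = jn (odt a x) (odt b x)"
proof (rule antisym)
  show "leq (jn (odt a x) (odt b x)) (odt (jn a b) x)"
    by (intro jn_lub od_mono1 le_jn1 le_jn2)
  have "leq (jn a b) (pl (ng x) (jn (odt a x) (odt b x)))"
    by (intro jn_lub; subst resid[symmetric]; metis od_comm le_jn1 le_jn2)
  thus "leq (odt (jn a b) x) (jn (odt a x) (odt b x))"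
    by (metis resid od_comm)
qed

lemma distB: "odt (mt a b) x = mt (odt a x) (odt b x)"
proof (rule antisym)
  show "leq (odt (mt a b) x) (mt (odt a x) (odt b x))"
    by (intro mt_glb od_mono1 le_mt1 le_mt2)
  define u where "u = mt (odt a x) (odt b x)"
  have "u = odt u (jn (pl (ng a) b) (pl (ng b) a))" by (simp add: prelin)
  also have "\<dots> = jn (odt (pl (ng a) b) u) (odt (pl (ng b) a) u)" by (metis distA od_comm)
  finally have ue: "u = jn (odt (pl (ng a) b) u) (odt (pl (ng b) a) u)" .
  have 1: "leq (odt (pl (ng a) b) u) (odt (mt a b) x)"
  proof -
    have "leq (odt (pl (ng a) b) u) (odt (pl (ng a) b) (odt a x))"
      by (rule od_mono) (simp add: u_def le_mt1)
    also have "odt (pl (ng a) b) (odt a x) = odt (mt a b) x"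
      by (simp add: mt_od od_comm od_lcomm od_assoc)
    finally show ?thesis .
  qed
  have 2: "leq (odt (pl (ng b) a) u) (odt (mt a b) x)"
  proof -
    have "leq (odt (pl (ng b) a) u) (odt (pl (ng b) a) (odt b x))"
      by (rule od_mono) (simp add: u_def le_mt2)
    also have "odt (pl (ng b) a) (odt b x) = odt (mt b a) x"
      by (simp add: mt_od od_comm od_lcomm od_assoc)
    also have "\<dots> = odt (mt a b) x" by (simp add: mt_comm)
    finally show ?thesis .
  qed
  show "leq u (odt (mt a b) x)" using jn_lub[OF 1 2] ue by simp
qed

abbreviation "bl a \<equiv> pl a a = a"

lemma bool_od: "bl a \<Longrightarrow> odt a a = a"
proof -
  assume b: "bl a"
  have "odt a (ng (odt a a)) = mt a (ng a)" by (simp add: mt_od ng_od)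
  also have "\<dots> = mt (ng a) a" by (rule mt_comm)
  also have "\<dots> = z" by (simp add: mt_od b)
  finally have "leq a (odt a a)" by (simp add: le_od)
  thus ?thesis using od_le[of a a] by (metis antisym)
qed
lemma bool_neg: "bl a \<Longrightarrow> bl (ng a)"
  by (metis bool_od ng_od)
lemma od_bool: "odt a a = a \<Longrightarrow> bl a"
proof -
  assume "odt a a = a"
  hence "bl (ng a)" by (metis ng_od)
  hence "odt (ng a) (ng a) = ng a" by (rule bool_od)
  thus ?thesis by (simp add: od ng_inj)
qed
lemma bool_absorb: "bl a \<Longrightarrow> leq w a \<Longrightarrow> odt a w = w"
proof -
  assume b: "bl a" and l: "leq w a"
  have w: "w = odt a (pl (ng a) w)" using mt_le[OF l] mt_comm[of w a] by (simp add: mt_od)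
  have "odt a w = odt (odt a a) (pl (ng a) w)" by (subst w) (simp add: od_assoc)
  also have "\<dots> = w" using w by (simp add: bool_od[OF b])
  finally show ?thesis .
qed
lemma bool_od_mt: "bl a \<Longrightarrow> odt a b = mt a b"
proof (rule antisym)
  assume b: "bl a"
  show "leq (odt a b) (mt a b)" by (intro mt_glb od_le od_le2)
  have "mt a b = odt a (mt a b)" using bool_absorb[OF b le_mt1] by simp
  also have "leq \<dots> (odt a b)" by (intro od_mono le_mt2)
  finally show "leq (mt a b) (odt a b)" .
qed
lemma bool_mt: "bl a \<Longrightarrow> bl b \<Longrightarrow> bl (mt a b)"
proof -
  assume a: "bl a" and b: "bl b"
  define m where "m = mt a b"
  have 1: "odt a m = m" using bool_absorb[OF a le_mt1] m_def by simp
  have 2: "odt b m = m" using bool_absorb[OF b le_mt2] m_def by simp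
  have 3: "odt a b = m" using bool_od_mt[OF a] m_def by simp
  have "odt m m = m" by (metis 1 2 3 od_assoc)
  thus ?thesis using od_bool m_def by simp
qed
lemma bool_jn: "bl a \<Longrightarrow> bl b \<Longrightarrow> bl (jn a b)"
  by (metis jn_dual bool_neg bool_mt)

lemma d_zero: "odot_join_derivation pl ng d \<Longrightarrow> d z = z"
proof -
  assume "odot_join_derivation pl ng d"
  hence "d (odt z z) = jn (odt (d z) z) (odt z (d z))" unfolding odot_join_derivation_def by blast
  thus ?thesis by (simp add: jn)
qed
lemma d_le: "odot_join_derivation pl ng d \<Longrightarrow> leq (d x) x"
proof -
  assume D: "odot_join_derivation pl ng d"
  hence "d (odt x (ng x)) = jn (odt (d x) (ng x)) (odt x (d (ng x)))" unfolding odot_join_derivation_def by blast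
  hence "jn (odt (d x) (ng x)) (odt x (d (ng x))) = z" using d_zero[OF D] by simp
  hence "leq (odt (d x) (ng x)) z" by (metis le_jn1)
  hence "odt (d x) (ng x) = z" by (metis antisym le_bot)
  thus ?thesis by (simp add: le_od)
qed
lemma d_ge: "odot_join_derivation pl ng d \<Longrightarrow> leq (odt (d (ng z)) x) (d x)"
proof -
  assume D: "odot_join_derivation pl ng d"
  hence "d (odt x (ng z)) = jn (odt (d x) (ng z)) (odt x (d (ng z)))" unfolding odot_join_derivation_def by blast
  hence "d x = jn (d x) (odt x (d (ng z)))" by simp
  thus ?thesis by (metis le_jn2 od_comm)
qed
lemma ider_pder: "d \<in> IDer pl ng z \<Longrightarrow> d = pder pl ng (d (ng z))"
proof
  fix x assume "d \<in> IDer pl ng z"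
  hence D: "odot_join_derivation pl ng d" and I: "mv_isotone pl ng z d" and B: "bl (d (ng z))"
    by (auto simp: IDer_def mv_one_def mv_boolean_center_def)
  define a where "a = d (ng z)"
  have "leq (d x) a" using I by (simp add: mv_isotone_def a_def)
  hence "odt a (d x) = d x" using bool_absorb B a_def by simp
  moreover have "leq (odt a (d x)) (odt a x)" by (intro od_mono d_le D)
  ultimately have "leq (d x) (odt a x)" by simp
  moreover have "leq (odt a x) (d x)" using d_ge[OF D] a_def by simp
  ultimately show "d x = pder pl ng (d (ng z)) x" by (simp add: pder_def a_def antisym)
qed
lemma pder_ider: "bl a \<Longrightarrow> pder pl ng a \<in> IDer pl ng z"
proof -
  assume B: "bl a"
  have "odot_join_derivation pl ng (pder pl ng a)"
    unfolding odot_join_derivation_def pder_def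
    by (simp add: jn_le od_comm od_lcomm od_assoc)
  moreover have "mv_isotone pl ng z (pder pl ng a)"
    by (simp add: mv_isotone_def pder_def od_mono)
  ultimately show ?thesis using B by (simp add: IDer_def pder_def mv_one_def mv_boolean_center_def)
qed
lemma pder_jn: "pder pl ng (jn a b) = fun_join pl ng (pder pl ng a) (pder pl ng b)"
  by (simp add: pder_def fun_join_def distA)
lemma pder_mt: "pder pl ng (mt a b) = fun_meet pl ng (pder pl ng a) (pder pl ng b)"
  by (simp add: pder_def fun_meet_def distB)
lemma pder_one: "pder pl ng a (ng z) = a" by (simp add: pder_def)
lemma pder_inj: "inj (pder pl ng)" by (metis injI pder_one)

end

theorem proposition5p11:
  fixes pl :: "'a \<Rightarrow> 'a \<Rightarrow> 'a" and ng :: "'a \<Rightarrow> 'a" and z :: 'a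
  assumes "mv_algebra pl ng z"
  shows
    \<comment> \<open>closure of PDer(A) and IDer(A) under pointwise join and meet\<close>
    "(\<forall>d\<in>PDer pl ng. \<forall>e\<in>PDer pl ng.
        fun_join pl ng d e \<in> PDer pl ng \<and> fun_meet pl ng d e \<in> PDer pl ng)
   \<and> (\<forall>d\<in>IDer pl ng z. \<forall>e\<in>IDer pl ng z.
        fun_join pl ng d e \<in> IDer pl ng z \<and> fun_meet pl ng d e \<in> IDer pl ng z)
   \<comment> \<open>(1) d_a \<mapsto> a is a well-defined lattice isomorphism PDer(A) \<rightarrow> A;
       stated via its inverse a \<mapsto> d_a\<close>
   \<and> bij_betw (pder pl ng) UNIV (PDer pl ng)
   \<and> (\<forall>a b. pder pl ng (mv_join pl ng a b) = fun_join pl ng (pder pl ng a) (pder pl ng b))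
   \<and> (\<forall>a b. pder pl ng (mv_meet pl ng a b) = fun_meet pl ng (pder pl ng a) (pder pl ng b))
   \<comment> \<open>(2) d \<mapsto> d(1) is a lattice isomorphism IDer(A) \<rightarrow> B(A)\<close>
   \<and> bij_betw (\<lambda>d. d (mv_one ng z)) (IDer pl ng z) (mv_boolean_center pl)
   \<and> (\<forall>d\<in>IDer pl ng z. \<forall>e\<in>IDer pl ng z.
        fun_join pl ng d e (mv_one ng z) = mv_join pl ng (d (mv_one ng z)) (e (mv_one ng z))
      \<and> fun_meet pl ng d e (mv_one ng z) = mv_meet pl ng (d (mv_one ng z)) (e (mv_one ng z)))"
proof -
  interpret mv pl ng z using assms unfolding mv_algebra_def by unfold_locales blast+
  have I: "IDer pl ng z = pder pl ng ` mv_boolean_center pl"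
  proof
    show "IDer pl ng z \<subseteq> pder pl ng ` mv_boolean_center pl"
    proof
      fix d assume d: "d \<in> IDer pl ng z"
      hence "d (ng z) \<in> mv_boolean_center pl" by (simp add: IDer_def mv_one_def)
      thus "d \<in> pder pl ng ` mv_boolean_center pl" using ider_pder[OF d] by blast
    qed
    show "pder pl ng ` mv_boolean_center pl \<subseteq> IDer pl ng z"
      using pder_ider by (auto simp: mv_boolean_center_def)
  qed
  have c1: "\<forall>d\<in>PDer pl ng. \<forall>e\<in>PDer pl ng.
        fun_join pl ng d e \<in> PDer pl ng \<and> fun_meet pl ng d e \<in> PDer pl ng"
    by (auto simp: PDer_def pder_jn[symmetric] pder_mt[symmetric] simp del: mv_join_def mv_meet_def)
  have c2: "\<forall>d\<in>IDer pl ng z. \<forall>e\<in>IDer pl ng z.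
        fun_join pl ng d e \<in> IDer pl ng z \<and> fun_meet pl ng d e \<in> IDer pl ng z"
    unfolding I
  proof (intro ballI conjI)
    fix d e assume "d \<in> pder pl ng ` mv_boolean_center pl" "e \<in> pder pl ng ` mv_boolean_center pl"
    then obtain a b where a: "bl a" "d = pder pl ng a" and b: "bl b" "e = pder pl ng b"
      by (auto simp: mv_boolean_center_def)
    show "fun_join pl ng d e \<in> pder pl ng ` mv_boolean_center pl"
      unfolding a(2) b(2) pder_jn[symmetric] mv_boolean_center_def using bool_jn[OF a(1) b(1)] by blast
    show "fun_meet pl ng d e \<in> pder pl ng ` mv_boolean_center pl"
      unfolding a(2) b(2) pder_mt[symmetric] mv_boolean_center_def using bool_mt[OF a(1) b(1)] by blast
  qed
  have c3: "bij_betw (pder pl ng) UNIV (PDer pl ng)"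
    by (simp add: bij_betw_def PDer_def pder_inj)
  have c4: "bij_betw (\<lambda>d. d (mv_one ng z)) (IDer pl ng z) (mv_boolean_center pl)"
  proof (rule bij_betw_byWitness[where f'="pder pl ng"])
    show "\<forall>a\<in>IDer pl ng z. pder pl ng (a (mv_one ng z)) = a"
      unfolding mv_one_def using ider_pder by (metis (no_types))
    show "\<forall>a'\<in>mv_boolean_center pl. pder pl ng a' (mv_one ng z) = a'"
      by (simp add: mv_one_def pder_one)
    show "(\<lambda>d. d (mv_one ng z)) ` IDer pl ng z \<subseteq> mv_boolean_center pl"
      by (auto simp: IDer_def)
    show "pder pl ng ` mv_boolean_center pl \<subseteq> IDer pl ng z" using I by simp
  qed
  have c5: "\<forall>d\<in>IDer pl ng z. \<forall>e\<in>IDer pl ng z.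
        fun_join pl ng d e (mv_one ng z) = mv_join pl ng (d (mv_one ng z)) (e (mv_one ng z))
      \<and> fun_meet pl ng d e (mv_one ng z) = mv_meet pl ng (d (mv_one ng z)) (e (mv_one ng z))"
    by (simp add: fun_join_def fun_meet_def)
  show ?thesis using c1 c2 c3 c4 c5 pder_jn pder_mt by blast
qed

end
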